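(* Let $X$ be a simplicial set. There is an ordinal $\lambda$ such that $J^\lambda X$ is non-singular.
   Context: A simplex is embedded if its representing map is degreewise injective; a simplicial set is non-singular if every non-degenerate simplex is embedded. $Y^\sharp$ is the set of non-degenerate simplices of $Y$, $n_x$ the degree of $x$, $\bar x$ its representing map, $\varepsilon_i:[0]\to[n]$ the operator $0\mapsto i$. Enforcer: for $x\in Y^\sharp$ of degree $n$, let $i\sim j$ iff $x\varepsilon_i=x\varepsilon_j$, $i\approx k$ iff some $j$ has $i\le k\le j$ and $i\sim j$, and $\simeq$ the equivalence relation generated by $\approx$; its classes are intervals, and $\rho_x:[n]\to[m_x]$ is the order-preserving surjection onto the ordered quotient $\{0,\dots,n\}/\simeq\cong[m_x]$. Enforced collapse: $JY$ is the pushout of $\bigsqcup_{x\in Y^\sharp}\Delta[m_x]\xleftarrow{\sqcup_x\rho_x}\bigsqcup_{x\in Y^\sharp}\Delta[n_x]\xrightarrow{(\bar x)_x}Y$. Iteration: $J^0X=X$, $J^{\beta+1}X=J(J^\beta X)$ with $f^{\beta,\beta+1}:J^\beta X\to J^{\beta+1}X$ the canonical map, and for a limit ordinal $\gamma$, $J^\gamma X=\operatorname{colim}_{\beta<\gamma}J^\beta X$ (the quotient of $X$ identifying $x,y$ iff $f^{0,\beta}(x)=f^{0,\beta}(y)$ for some $\beta<\gamma$); $f^{\alpha,\beta}$ are the induced maps. *)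

theory Defs
  imports Main
begin

text \<open>A simplicial set with simplices drawn from type 'a: simp X n is the set X_n of
n-simplices, and smap X m n theta x is x theta for an order preserving
theta : [m] -> [n] (represented by a function nat => nat; only its values on
0..m matter).\<close>

record 'a sset =
  simp :: "nat \<Rightarrow> 'a set"
  smap :: "nat \<Rightarrow> nat \<Rightarrow> (nat \<Rightarrow> nat) \<Rightarrow> 'a \<Rightarrow> 'a"

definition delta_map :: "nat \<Rightarrow> nat \<Rightarrow> (nat \<Rightarrow> nat) \<Rightarrow> bool" where
  "delta_map m n \<theta> \<longleftrightarrow> (\<forall>i\<le>m. \<theta> i \<le> n) \<and> (\<forall>i j. i \<le> j \<longrightarrow> j \<le> m \<longrightarrow> \<theta> i \<le> \<theta> j)"

definition is_sset :: "'a sset \<Rightarrow> bool" where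
  "is_sset X \<longleftrightarrow>
     (\<forall>m n \<theta> x. delta_map m n \<theta> \<longrightarrow> x \<in> simp X n \<longrightarrow> smap X m n \<theta> x \<in> simp X m) \<and>
     (\<forall>n x. x \<in> simp X n \<longrightarrow> smap X n n id x = x) \<and>
     (\<forall>k m n \<phi> \<theta> x. delta_map k m \<phi> \<longrightarrow> delta_map m n \<theta> \<longrightarrow> x \<in> simp X n \<longrightarrow>
        smap X k m \<phi> (smap X m n \<theta> x) = smap X k n (\<theta> \<circ> \<phi>) x) \<and>
     (\<forall>m n \<theta> \<theta>' x. x \<in> simp X n \<longrightarrow> (\<forall>i\<le>m. \<theta> i = \<theta>' i) \<longrightarrow>
        smap X m n \<theta> x = smap X m n \<theta>' x)"

text \<open>Every J^beta X is a quotient of X; we represent it by a simplicial congruence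
R on X (R n an equivalence relation on X_n, compatible with all operators).\<close>

definition is_cong :: "'a sset \<Rightarrow> (nat \<Rightarrow> ('a \<times> 'a) set) \<Rightarrow> bool" where
  "is_cong X R \<longleftrightarrow> (\<forall>n. equiv (simp X n) (R n)) \<and>
     (\<forall>m n \<theta> x y. delta_map m n \<theta> \<longrightarrow> (x, y) \<in> R n \<longrightarrow>
        (smap X m n \<theta> x, smap X m n \<theta> y) \<in> R m)"

definition cong_hull :: "'a sset \<Rightarrow> (nat \<Rightarrow> ('a \<times> 'a) set) \<Rightarrow> nat \<Rightarrow> ('a \<times> 'a) set" where
  "cong_hull X G = (\<lambda>n. \<Inter>{R n | R. is_cong X R \<and> (\<forall>m. G m \<subseteq> R m)})"

definition id_cong :: "'a sset \<Rightarrow> nat \<Rightarrow> ('a \<times> 'a) set" where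
  "id_cong X = (\<lambda>n. Id_on (simp X n))"

definition sdeg :: "nat \<Rightarrow> nat \<Rightarrow> nat" where
  "sdeg i j = (if j \<le> i then j else j - 1)"

definition nondeg_q :: "'a sset \<Rightarrow> (nat \<Rightarrow> ('a \<times> 'a) set) \<Rightarrow> nat \<Rightarrow> 'a \<Rightarrow> bool" where
  "nondeg_q X R n x \<longleftrightarrow> x \<in> simp X n \<and>
     \<not> (\<exists>k i y. n = Suc k \<and> i \<le> k \<and> y \<in> simp X k \<and> (x, smap X n k (sdeg i) y) \<in> R n)"

text \<open>The class of x in X_n is embedded in X/R: its representing map
Delta[n] -> X/R, theta |-> [x theta], is injective in every degree.\<close>
definition embedded_q :: "'a sset \<Rightarrow> (nat \<Rightarrow> ('a \<times> 'a) set) \<Rightarrow> nat \<Rightarrow> 'a \<Rightarrow> bool" where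
  "embedded_q X R n x \<longleftrightarrow>
     (\<forall>m \<theta> \<theta>'. delta_map m n \<theta> \<longrightarrow> delta_map m n \<theta>' \<longrightarrow>
        (smap X m n \<theta> x, smap X m n \<theta>' x) \<in> R m \<longrightarrow> (\<forall>i\<le>m. \<theta> i = \<theta>' i))"

definition nonsingular_q :: "'a sset \<Rightarrow> (nat \<Rightarrow> ('a \<times> 'a) set) \<Rightarrow> bool" where
  "nonsingular_q X R \<longleftrightarrow> (\<forall>n x. nondeg_q X R n x \<longrightarrow> embedded_q X R n x)"

definition enf_sim :: "'a sset \<Rightarrow> (nat \<Rightarrow> ('a \<times> 'a) set) \<Rightarrow> nat \<Rightarrow> 'a \<Rightarrow> nat \<Rightarrow> nat \<Rightarrow> bool" where
  "enf_sim X R n x i j \<longleftrightarrow> i \<le> n \<and> j \<le> n \<and>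
     (smap X 0 n (\<lambda>_. i) x, smap X 0 n (\<lambda>_. j) x) \<in> R 0"

definition enf_approx :: "'a sset \<Rightarrow> (nat \<Rightarrow> ('a \<times> 'a) set) \<Rightarrow> nat \<Rightarrow> 'a \<Rightarrow> (nat \<times> nat) set" where
  "enf_approx X R n x = {(i, k). \<exists>j. i \<le> k \<and> k \<le> j \<and> enf_sim X R n x i j}"

definition enf_simeq :: "'a sset \<Rightarrow> (nat \<Rightarrow> ('a \<times> 'a) set) \<Rightarrow> nat \<Rightarrow> 'a \<Rightarrow> (nat \<times> nat) set" where
  "enf_simeq X R n x = (enf_approx X R n x \<union> (enf_approx X R n x)\<inverse>)\<^sup>*"

text \<open>rho_x : [n] -> [m_x], the order preserving surjection onto the ordered
quotient {0..n}/simeq (whose classes are intervals): rho_x i is the index of the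
class of i, i.e. the number of class boundaries j-1 | j with 0 < j <= i.\<close>
definition enf_rho :: "'a sset \<Rightarrow> (nat \<Rightarrow> ('a \<times> 'a) set) \<Rightarrow> nat \<Rightarrow> 'a \<Rightarrow> nat \<Rightarrow> nat" where
  "enf_rho X R n x i = card {j. 0 < j \<and> j \<le> i \<and> (j - 1, j) \<notin> enf_simeq X R n x}"

text \<open>For Y = X/R, JY is the pushout of the coproduct of the rho_x along the
representing maps; since each rho_x is a (split) surjection, this is the
quotient of Y by the simplicial congruence generated by the pairs
(x theta, x theta') with x non-degenerate and rho_x theta = rho_x theta'.\<close>
definition J_step :: "'a sset \<Rightarrow> (nat \<Rightarrow> ('a \<times> 'a) set) \<Rightarrow> nat \<Rightarrow> ('a \<times> 'a) set" where
  "J_step X R = cong_hull X (\<lambda>k. R k \<union>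
     {(smap X k n \<theta> x, smap X k n \<theta>' x) | n x \<theta> \<theta>'.
        nondeg_q X R n x \<and> delta_map k n \<theta> \<and> delta_map k n \<theta>' \<and>
        (\<forall>i\<le>k. enf_rho X R n x (\<theta> i) = enf_rho X R n x (\<theta>' i))})"

text \<open>Ordinals are represented by elements of well-orders: for a well-order r and
b in Field r, J_iter X r b represents J^beta X where beta is the order type of
the strict predecessors of b.\<close>

definition imm_pred :: "('o \<times> 'o) set \<Rightarrow> 'o \<Rightarrow> 'o \<Rightarrow> bool" where
  "imm_pred r p b \<longleftrightarrow> (p, b) \<in> r - Id \<and> \<not> (\<exists>z. (p, z) \<in> r - Id \<and> (z, b) \<in> r - Id)"

definition J_iter :: "'a sset \<Rightarrow> ('o \<times> 'o) set \<Rightarrow> 'o \<Rightarrow> nat \<Rightarrow> ('a \<times> 'a) set" where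
  "J_iter X r = wfrec (r - Id) (\<lambda>g b.
     if \<not> (\<exists>y. (y, b) \<in> r - Id) then id_cong X
     else if (\<exists>p. imm_pred r p b) then J_step X (g (THE p. imm_pred r p b))
     else (\<lambda>n. \<Union>y\<in>{y. (y, b) \<in> r - Id}. g y n))"

end

theory Submission
  imports Defs
begin

lemma cong_full:
  assumes "is_sset X"
  shows "is_cong X (\<lambda>n. simp X n \<times> simp X n)"
proof -
  have "\<forall>m n \<theta> x. delta_map m n \<theta> \<longrightarrow> x \<in> simp X n \<longrightarrow> smap X m n \<theta> x \<in> simp X m"
    using assms unfolding is_sset_def by blast
  then show ?thesis unfolding is_cong_def equiv_def refl_on_def sym_def trans_def by blast
qed
lemma id_cong_cong:
  assumes X: "is_sset X" shows "is_cong X (id_cong X)"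
proof -
  have "\<forall>m n \<theta> x. delta_map m n \<theta> \<longrightarrow> x \<in> simp X n \<longrightarrow> smap X m n \<theta> x \<in> simp X m"
    using assms unfolding is_sset_def by blast
  then show ?thesis unfolding is_cong_def id_cong_def equiv_def refl_on_def sym_def trans_def Id_on_def
    by blast
qed


lemma gen_sub_hull: "G m \<subseteq> cong_hull X G m"
  unfolding cong_hull_def by blast
lemma J_step_incr: "R n \<subseteq> J_step X R n"
  unfolding J_step_def by (rule order_trans[OF _ gen_sub_hull]) (rule Un_upper1)


lemma J_step_gen:
  assumes "nondeg_q X R n x" "delta_map k n \<theta>" "delta_map k n \<theta>'"
    "\<forall>i\<le>k. enf_rho X R n x (\<theta> i) = enf_rho X R n x (\<theta>' i)"
  shows "(smap X k n \<theta> x, smap X k n \<theta>' x) \<in> J_step X R k"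
  unfolding J_step_def
  apply (rule set_mp[OF gen_sub_hull])
  apply (rule UnI2)
  apply (rule CollectI)
  apply (rule exI[of _ n], rule exI[of _ x], rule exI[of _ \<theta>], rule exI[of _ \<theta>'])
  using assms by simp


lemma cong_equiv: "is_cong X R \<Longrightarrow> equiv (simp X n) (R n)"
  unfolding is_cong_def by simp
lemma cong_compat: "is_cong X R \<Longrightarrow> delta_map m n \<theta> \<Longrightarrow> (x, y) \<in> R n \<Longrightarrow>
        (smap X m n \<theta> x, smap X m n \<theta> y) \<in> R m"
  unfolding is_cong_def by simp

lemma cong_hull_cong:
  assumes X: "is_sset X" and G: "\<And>m. G m \<subseteq> simp X m \<times> simp X m"
  shows "is_cong X (cong_hull X G)"
proof -
  let ?F = "{R. is_cong X R \<and> (\<forall>m. G m \<subseteq> R m)}"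
  have full: "(\<lambda>n. simp X n \<times> simp X n) \<in> ?F" using cong_full[OF X] G by blast
  have mem: "(a, b) \<in> cong_hull X G n \<longleftrightarrow> (\<forall>R\<in>?F. (a,b) \<in> R n)" for a b n
    unfolding cong_hull_def by blast
  have eq: "equiv (simp X n) (cong_hull X G n)" for n
  proof (rule equivI)
    show "cong_hull X G n \<subseteq> simp X n \<times> simp X n"
    proof
      fix p assume "p \<in> cong_hull X G n"
      then have "\<forall>R\<in>?F. p \<in> R n" using mem[of "fst p" "snd p" n] by simp
      from bspec[OF this full] show "p \<in> simp X n \<times> simp X n" by simp
    qed
    show "refl_on (simp X n) (cong_hull X G n)" unfolding refl_on_def mem
    proof (intro ballI)
      fix a R assume "a \<in> simp X n" "R \<in> ?F"
      then show "(a,a) \<in> R n" using cong_equiv[of X R n] unfolding equiv_def refl_on_def by blast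
    qed
    show "sym (cong_hull X G n)" unfolding sym_def mem
    proof (intro allI impI ballI)
      fix a b R assume "\<forall>R\<in>?F. (a, b) \<in> R n" "R \<in> ?F"
      then show "(b,a) \<in> R n" using cong_equiv[of X R n] unfolding equiv_def sym_def by blast
    qed
    show "trans (cong_hull X G n)" unfolding trans_def mem
    proof (intro allI impI ballI)
      fix a b c R assume "\<forall>R\<in>?F. (a, b) \<in> R n" "\<forall>R\<in>?F. (b, c) \<in> R n" "R \<in> ?F"
      then show "(a,c) \<in> R n" using cong_equiv[of X R n] unfolding equiv_def trans_def by blast
    qed
  qed
  show ?thesis unfolding is_cong_def
  proof (intro conjI allI impI)
    fix n show "equiv (simp X n) (cong_hull X G n)" by (rule eq)
  next
    fix m n \<theta> x y assume d: "delta_map m n \<theta>" and xy: "(x, y) \<in> cong_hull X G n"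
    show "(smap X m n \<theta> x, smap X m n \<theta> y) \<in> cong_hull X G m"
      unfolding mem
    proof
      fix R
      assume RF: "R \<in> ?F"
      then have c: "is_cong X R" by simp
      from xy have "\<forall>R\<in>?F. (x, y) \<in> R n" by (simp only: mem)
      from bspec[OF this RF] have "(x, y) \<in> R n" .
      then show "(smap X m n \<theta> x, smap X m n \<theta> y) \<in> R m"
        by (rule cong_compat[OF c d])
    qed
  qed
qed



lemma J_step_cong:
  assumes X: "is_sset X" and R: "is_cong X R"
  shows "is_cong X (J_step X R)"
  unfolding J_step_def
proof (rule cong_hull_cong[OF X])
  fix m
  have 1: "R m \<subseteq> simp X m \<times> simp X m" using cong_equiv[OF R] unfolding equiv_def by simp
  have sm: "\<forall>m n \<theta> x. delta_map m n \<theta> \<longrightarrow> x \<in> simp X n \<longrightarrow> smap X m n \<theta> x \<in> simp X m"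
    using X unfolding is_sset_def by simp
  have 2: "smap X m n \<theta> x \<in> simp X m" if "nondeg_q X R n x" "delta_map m n \<theta>" for n x \<theta>
    using that sm unfolding nondeg_q_def by simp
  show "R m \<union>
     {(smap X m n \<theta> x, smap X m n \<theta>' x) | n x \<theta> \<theta>'.
        nondeg_q X R n x \<and> delta_map m n \<theta> \<and> delta_map m n \<theta>' \<and>
        (\<forall>i\<le>m. enf_rho X R n x (\<theta> i) = enf_rho X R n x (\<theta>' i))} \<subseteq> simp X m \<times> simp X m"
    using 1 2 by auto
qed

lemma union_cong:
  assumes ne: "I \<noteq> {}" and C: "\<And>i. i \<in> I \<Longrightarrow> is_cong X (F i)"
    and ch: "\<And>i j n. i \<in> I \<Longrightarrow> j \<in> I \<Longrightarrow> F i n \<subseteq> F j n \<or> F j n \<subseteq> F i n"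
  shows "is_cong X (\<lambda>n. \<Union>i\<in>I. F i n)"
  unfolding is_cong_def
proof (intro conjI allI impI)
  fix n
  have E: "\<And>i. i \<in> I \<Longrightarrow> equiv (simp X n) (F i n)" using C cong_equiv by blast
  show "equiv (simp X n) (\<Union>i\<in>I. F i n)"
  proof (rule equivI)
    show "(\<Union>i\<in>I. F i n) \<subseteq> simp X n \<times> simp X n"
    proof
      fix p assume "p \<in> (\<Union>i\<in>I. F i n)"
      then obtain i where "i \<in> I" "p \<in> F i n" by blast
      then show "p \<in> simp X n \<times> simp X n" using E[of i] unfolding equiv_def by auto
    qed
    show "refl_on (simp X n) (\<Union>i\<in>I. F i n)" unfolding refl_on_def
    proof
      fix a assume a: "a \<in> simp X n"
      obtain i where i: "i \<in> I" using ne by blast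
      then have "(a,a) \<in> F i n" using E[OF i] a unfolding equiv_def refl_on_def by simp
      then show "(a,a) \<in> (\<Union>i\<in>I. F i n)" using i by blast
    qed
    show "sym (\<Union>i\<in>I. F i n)" unfolding sym_def
    proof (intro allI impI)
      fix a b assume "(a, b) \<in> (\<Union>i\<in>I. F i n)"
      then obtain i where i: "i \<in> I" "(a,b) \<in> F i n" by blast
      then have "(b,a) \<in> F i n" using E[OF i(1)] unfolding equiv_def sym_def by simp
      then show "(b,a) \<in> (\<Union>i\<in>I. F i n)" using i by blast
    qed
    show "trans (\<Union>i\<in>I. F i n)" unfolding trans_def
    proof (intro allI impI)
      fix x y z assume a: "(x, y) \<in> (\<Union>i\<in>I. F i n)" "(y, z) \<in> (\<Union>i\<in>I. F i n)"
      then obtain i j where i: "i \<in> I" "(x,y) \<in> F i n" and j: "j \<in> I" "(y,z) \<in> F j n" by blast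
      have ti: "trans (F i n)" and tj: "trans (F j n)" using E i j unfolding equiv_def by simp_all
      from ch[OF i(1) j(1)] show "(x, z) \<in> (\<Union>i\<in>I. F i n)"
      proof
        assume "F i n \<subseteq> F j n"
        then have "(x,y) \<in> F j n" using i by blast
        then have "(x,z) \<in> F j n" using j(2) tj unfolding trans_def by blast
        then show ?thesis using j by blast
      next
        assume "F j n \<subseteq> F i n"
        then have "(y,z) \<in> F i n" using j by blast
        then have "(x,z) \<in> F i n" using i(2) ti unfolding trans_def by blast
        then show ?thesis using i by blast
      qed
    qed
  qed
next
  fix m n \<theta> x y assume d: "delta_map m n \<theta>" and "(x, y) \<in> (\<Union>i\<in>I. F i n)"
  then obtain i where i: "i \<in> I" "(x,y) \<in> F i n" by blast
  have "(smap X m n \<theta> x, smap X m n \<theta> y) \<in> F i m" by (rule cong_compat[OF C[OF i(1)] d i(2)])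
  then show "(smap X m n \<theta> x, smap X m n \<theta> y) \<in> (\<Union>i\<in>I. F i m)" using i by blast
qed



lemma wo_wf: "Well_order r \<Longrightarrow> wf (r - Id)"
  unfolding well_order_on_def by simp

lemma wo_trans: assumes "Well_order r" shows "trans (r - Id)"
proof -
  have t: "trans r" and a: "antisym r" using assms
    unfolding well_order_on_def linear_order_on_def partial_order_on_def preorder_on_def by auto
  show ?thesis unfolding trans_def
  proof (intro allI impI)
    fix x y z assume 1: "(x,y) \<in> r - Id" and 2: "(y,z) \<in> r - Id"
    have "(x,z) \<in> r" using 1 2 t unfolding trans_def by blast
    moreover have "x \<noteq> z"
    proof
      assume "x = z"
      then have "(y,x) \<in> r" using 2 by simp
      then have "x = y" using 1 a unfolding antisym_def by blast
      then show False using 1 by simp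
    qed
    ultimately show "(x,z) \<in> r - Id" by simp
  qed
qed

lemma wo_field: "(a, b) \<in> r - Id \<Longrightarrow> a \<in> Field r \<and> b \<in> Field r"
  unfolding Field_def by blast

lemma wo_total: assumes "Well_order r" "a \<in> Field r" "b \<in> Field r" "a \<noteq> b"
  shows "(a,b) \<in> r - Id \<or> (b,a) \<in> r - Id"
  using assms unfolding well_order_on_def linear_order_on_def total_on_def by blast

lemma wo_asym: assumes "Well_order r" "(a,b) \<in> r - Id" shows "(b,a) \<notin> r - Id"
  using assms wo_trans[OF assms(1)] wf_not_sym[OF wo_wf[OF assms(1)]] by blast

lemma imm_pred_unique:
  assumes W: "Well_order r" and p: "imm_pred r p b" and q: "imm_pred r q b"
  shows "p = q"
proof (rule ccontr)
  assume ne: "p \<noteq> q"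
  have pb: "(p,b) \<in> r - Id" and qb: "(q,b) \<in> r - Id" using p q unfolding imm_pred_def by auto
  from wo_total[OF W _ _ ne] wo_field[OF pb] wo_field[OF qb]
  have "(p,q) \<in> r - Id \<or> (q,p) \<in> r - Id" by blast
  then show False using p q pb qb unfolding imm_pred_def by blast
qed

lemma J_iter_eq:
  fixes X :: "'a sset"
  assumes W: "Well_order r"
  shows "J_iter X r b = (if \<not> (\<exists>y. (y, b) \<in> r - Id) then id_cong X
     else if (\<exists>p. imm_pred r p b) then J_step X (J_iter X r (THE p. imm_pred r p b))
     else (\<lambda>n. \<Union>y\<in>{y. (y, b) \<in> r - Id}. J_iter X r y n))"
proof -
  define F where "F = (\<lambda>g b.
     if \<not> (\<exists>y. (y, b) \<in> r - Id) then id_cong X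
     else if (\<exists>p. imm_pred r p b) then J_step X (g (THE p. imm_pred r p b))
     else (\<lambda>n. \<Union>y\<in>{y. (y, b) \<in> r - Id}. (g y n :: ('a \<times> 'a) set)))"
  have J: "J_iter X r = wfrec (r - Id) F" unfolding J_iter_def F_def by simp
  have E: "J_iter X r b = F (cut (J_iter X r) (r - Id) b) b"
    unfolding J by (rule wfrec[OF wo_wf[OF W]])
  show ?thesis
  proof (cases "\<exists>y. (y, b) \<in> r - Id")
    case False then show ?thesis using E unfolding F_def by simp
  next
    case True
    show ?thesis
    proof (cases "\<exists>p. imm_pred r p b")
      case True2: True
      then obtain p where p: "imm_pred r p b" by blast
      have th: "(THE p. imm_pred r p b) = p"
        using p imm_pred_unique[OF W] by blast
      have "(p, b) \<in> r - Id" using p unfolding imm_pred_def by simp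
      then show ?thesis using E True True2 unfolding F_def th by (auto simp: cut_def)
    next
      case False
      then show ?thesis using E True unfolding F_def by (auto simp: cut_def)
    qed
  qed
qed



lemma J_iter_props:
  fixes X :: "'a sset"
  assumes X: "is_sset X" and W: "Well_order r"
  shows "is_cong X (J_iter X r b) \<and>
     (\<forall>c. (c,b) \<in> r - Id \<longrightarrow> (\<forall>n. J_step X (J_iter X r c) n \<subseteq> J_iter X r b n))"
proof (induction b rule: wf_induct_rule[OF wo_wf[OF W]])
  case (1 b)
  note IH = "1"
  note EQ = J_iter_eq[OF W, of X b]
  show ?case
  proof (cases "\<exists>y. (y, b) \<in> r - Id")
    case False
    then show ?thesis using EQ id_cong_cong[OF X] by auto
  next
    case True
    show ?thesis
    proof (cases "\<exists>p. imm_pred r p b")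
      case True2: True
      then obtain p where p: "imm_pred r p b" by blast
      have th: "(THE p. imm_pred r p b) = p"
        using p imm_pred_unique[OF W] by blast
      have pb: "(p, b) \<in> r - Id" using p unfolding imm_pred_def by simp
      have Jb: "J_iter X r b = J_step X (J_iter X r p)" using EQ True True2 th by auto
      have IHp: "is_cong X (J_iter X r p)"
        "\<And>c n. (c,p) \<in> r - Id \<Longrightarrow> J_step X (J_iter X r c) n \<subseteq> J_iter X r p n"
        using IH[OF pb] by blast+
      show ?thesis
      proof (intro conjI allI impI)
        show "is_cong X (J_iter X r b)" unfolding Jb by (rule J_step_cong[OF X IHp(1)])
      next
        fix c n assume cb: "(c, b) \<in> r - Id"
        show "J_step X (J_iter X r c) n \<subseteq> J_iter X r b n"
        proof (cases "c = p")
          case True then show ?thesis unfolding Jb by simp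
        next
          case False
          have "(c,p) \<in> r - Id \<or> (p,c) \<in> r - Id"
            using wo_total[OF W _ _ False] wo_field[OF cb] wo_field[OF pb] by blast
          moreover have "(p,c) \<notin> r - Id" using p cb unfolding imm_pred_def by blast
          ultimately have cp: "(c,p) \<in> r - Id" by blast
          show ?thesis unfolding Jb using IHp(2)[OF cp, of n] J_step_incr[of "J_iter X r p" n X]
            by blast
        qed
      qed
    next
      case False
      have Jb: "J_iter X r b = (\<lambda>n. \<Union>y\<in>{y. (y, b) \<in> r - Id}. J_iter X r y n)"
        using EQ True False by auto
      have IHy: "\<And>y. (y,b) \<in> r - Id \<Longrightarrow> is_cong X (J_iter X r y)"
        and IHy2: "\<And>y c n. (y,b) \<in> r - Id \<Longrightarrow> (c,y) \<in> r - Id \<Longrightarrow>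
            J_step X (J_iter X r c) n \<subseteq> J_iter X r y n"
        using IH by blast+
      show ?thesis
      proof (intro conjI allI impI)
        show "is_cong X (J_iter X r b)" unfolding Jb
        proof (rule union_cong)
          show "{y. (y, b) \<in> r - Id} \<noteq> {}" using True by blast
          show "\<And>i. i \<in> {y. (y, b) \<in> r - Id} \<Longrightarrow> is_cong X (J_iter X r i)" using IHy by blast
          fix i j n assume i: "i \<in> {y. (y, b) \<in> r - Id}" and j: "j \<in> {y. (y, b) \<in> r - Id}"
          have ib: "(i,b) \<in> r - Id" and jb: "(j,b) \<in> r - Id" using i j by auto
          show "J_iter X r i n \<subseteq> J_iter X r j n \<or> J_iter X r j n \<subseteq> J_iter X r i n"
          proof (cases "i = j")
            case True then show ?thesis by simp
          next
            case ne: False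
            have "(i,j) \<in> r - Id \<or> (j,i) \<in> r - Id"
              using wo_total[OF W _ _ ne] wo_field[OF ib] wo_field[OF jb] by blast
            then show ?thesis
            proof
              assume "(i,j) \<in> r - Id"
              then have "J_step X (J_iter X r i) n \<subseteq> J_iter X r j n" using IHy2[OF jb] by blast
              then show ?thesis using J_step_incr[of "J_iter X r i" n X] by blast
            next
              assume "(j,i) \<in> r - Id"
              then have "J_step X (J_iter X r j) n \<subseteq> J_iter X r i n" using IHy2[OF ib] by blast
              then show ?thesis using J_step_incr[of "J_iter X r j" n X] by blast
            qed
          qed
        qed
      next
        fix c n assume cb: "(c, b) \<in> r - Id"
        have "\<not> imm_pred r c b" using False by blast
        then obtain z where cz: "(c,z) \<in> r - Id" and zb: "(z,b) \<in> r - Id"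
          using cb unfolding imm_pred_def by blast
        have "J_step X (J_iter X r c) n \<subseteq> J_iter X r z n" using IHy2[OF zb cz] .
        then show "J_step X (J_iter X r c) n \<subseteq> J_iter X r b n" unfolding Jb using zb by blast
      qed
    qed
  qed
qed



lemma sset_parts:
  assumes "is_sset X"
  shows "\<And>m n \<theta> x. delta_map m n \<theta> \<Longrightarrow> x \<in> simp X n \<Longrightarrow> smap X m n \<theta> x \<in> simp X m"
    and "\<And>n x. x \<in> simp X n \<Longrightarrow> smap X n n id x = x"
    and "\<And>k m n \<phi> \<theta> x. delta_map k m \<phi> \<Longrightarrow> delta_map m n \<theta> \<Longrightarrow> x \<in> simp X n \<Longrightarrow>
        smap X k m \<phi> (smap X m n \<theta> x) = smap X k n (\<theta> \<circ> \<phi>) x"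
  using assms unfolding is_sset_def by blast+

lemma rho_step:
  assumes "(i, Suc i) \<in> enf_simeq X R n x"
  shows "enf_rho X R n x (Suc i) = enf_rho X R n x i"
proof -
  have "{j. 0 < j \<and> j \<le> Suc i \<and> (j - 1, j) \<notin> enf_simeq X R n x} =
        {j. 0 < j \<and> j \<le> i \<and> (j - 1, j) \<notin> enf_simeq X R n x}"
  proof (rule Collect_cong)
    fix j show "(0 < j \<and> j \<le> Suc i \<and> (j - 1, j) \<notin> enf_simeq X R n x) =
        (0 < j \<and> j \<le> i \<and> (j - 1, j) \<notin> enf_simeq X R n x)"
      using assms by (cases "j = Suc i") auto
  qed
  then show ?thesis unfolding enf_rho_def by simp
qed

lemma no_sim:
  assumes X: "is_sset X" and F: "J_step X R = R"
    and nd: "nondeg_q X R n x" and s: "enf_sim X R n x i j" and ij: "i < j"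
  shows False
proof -
  have xs: "x \<in> simp X n" using nd unfolding nondeg_q_def by simp
  have jn: "j \<le> n" using s unfolding enf_sim_def by simp
  have "(i, Suc i) \<in> enf_approx X R n x" unfolding enf_approx_def using s ij by (auto intro!: exI[of _ j])
  then have "(i, Suc i) \<in> enf_simeq X R n x" unfolding enf_simeq_def by blast
  note rs = rho_step[OF this]
  define k where "k = n - 1"
  have nk: "n = Suc k" and ik: "i \<le> k" using ij jn unfolding k_def by auto
  define d where "d = (\<lambda>l::nat. if l \<le> i then l else Suc l)"
  define t where "t = d \<circ> sdeg i"
  have dd: "delta_map k n d" unfolding delta_map_def d_def using nk ik by auto
  have ds: "delta_map n k (sdeg i)" unfolding delta_map_def sdeg_def using nk ik by auto
  have di: "delta_map n n id" unfolding delta_map_def by auto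
  have tl: "t l = (if l = Suc i then i else l)" for l
    unfolding t_def d_def sdeg_def by auto
  have dt: "delta_map n n t" unfolding delta_map_def tl using ij jn by auto
  have rc: "\<forall>l\<le>n. enf_rho X R n x (id l) = enf_rho X R n x (t l)"
    using rs by (simp add: tl)
  have "(smap X n n id x, smap X n n t x) \<in> J_step X R n"
    by (rule J_step_gen[OF nd di dt rc])
  then have "(smap X n n id x, smap X n n t x) \<in> R n" using F by simp
  moreover have "smap X n n id x = x" using sset_parts(2)[OF X xs] .
  moreover have "smap X n n t x = smap X n k (sdeg i) (smap X k n d x)"
    using sset_parts(3)[OF X ds dd xs] unfolding t_def by simp
  moreover have "smap X k n d x \<in> simp X k" by (rule sset_parts(1)[OF X dd xs])
  ultimately have "\<exists>k i y. n = Suc k \<and> i \<le> k \<and> y \<in> simp X k \<and> (x, smap X n k (sdeg i) y) \<in> R n"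
    using nk ik by metis
  then show False using nd unfolding nondeg_q_def by simp
qed

lemma fix_nonsingular:
  assumes X: "is_sset X" and R: "is_cong X R" and F: "J_step X R = R"
  shows "nonsingular_q X R"
  unfolding nonsingular_q_def embedded_q_def
proof (intro allI impI)
  fix n x m \<theta> \<theta>' i
  assume nd: "nondeg_q X R n x" and d1: "delta_map m n \<theta>" and d2: "delta_map m n \<theta>'"
    and rel: "(smap X m n \<theta> x, smap X m n \<theta>' x) \<in> R m" and im: "i \<le> m"
  have xs: "x \<in> simp X n" using nd unfolding nondeg_q_def by simp
  have dc: "delta_map 0 m (\<lambda>_. i)" unfolding delta_map_def using im by auto
  have "(smap X 0 m (\<lambda>_. i) (smap X m n \<theta> x), smap X 0 m (\<lambda>_. i) (smap X m n \<theta>' x)) \<in> R 0"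
    by (rule cong_compat[OF R dc rel])
  moreover have "smap X 0 m (\<lambda>_. i) (smap X m n \<theta> x) = smap X 0 n (\<lambda>_. \<theta> i) x"
    using sset_parts(3)[OF X dc d1 xs] by (simp add: comp_def)
  moreover have "smap X 0 m (\<lambda>_. i) (smap X m n \<theta>' x) = smap X 0 n (\<lambda>_. \<theta>' i) x"
    using sset_parts(3)[OF X dc d2 xs] by (simp add: comp_def)
  ultimately have r0: "(smap X 0 n (\<lambda>_. \<theta> i) x, smap X 0 n (\<lambda>_. \<theta>' i) x) \<in> R 0" by simp
  have b: "\<theta> i \<le> n" "\<theta>' i \<le> n" using d1 d2 im unfolding delta_map_def by auto
  have s1: "enf_sim X R n x (\<theta> i) (\<theta>' i)" unfolding enf_sim_def using b r0 by simp
  have "sym (R 0)" using cong_equiv[OF R, of 0] unfolding equiv_def by simp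
  then have s2: "enf_sim X R n x (\<theta>' i) (\<theta> i)" unfolding enf_sim_def using b r0
    unfolding sym_def by blast
  show "\<theta> i = \<theta>' i"
  proof (rule ccontr)
    assume "\<theta> i \<noteq> \<theta>' i"
    then have "\<theta> i < \<theta>' i \<or> \<theta>' i < \<theta> i" by arith
    then show False using no_sim[OF X F nd s1] no_sim[OF X F nd s2] by blast
  qed
qed



lemma class_min:
  assumes w: "well_order_on UNIV w" and x: "(x, x) \<in> R"
  obtains m where "(m, x) \<in> R" "\<And>z. (z, x) \<in> R \<Longrightarrow> (m, z) \<in> w"
proof -
  have wf: "wf (w - Id)" using w unfolding well_order_on_def by simp
  have tot: "total_on UNIV w" and rf: "refl_on UNIV w" using w
    unfolding well_order_on_def linear_order_on_def partial_order_on_def preorder_on_def by auto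
  obtain m where m: "m \<in> {z. (z,x) \<in> R}" "\<And>y. (y, m) \<in> w - Id \<Longrightarrow> y \<notin> {z. (z,x) \<in> R}"
    using wfE_min[OF wf, of x "{z. (z,x) \<in> R}"] x by blast
  show ?thesis
  proof (rule that)
    show "(m, x) \<in> R" using m(1) by simp
    fix z assume z: "(z, x) \<in> R"
    show "(m, z) \<in> w"
    proof (cases "z = m")
      case True then show ?thesis using rf unfolding refl_on_def by simp
    next
      case False
      have "(z, m) \<notin> w - Id" using m(2) z by blast
      then have "(z,m) \<notin> w" using False by simp
      then show ?thesis using tot False unfolding total_on_def by blast
    qed
  qed
qed

lemma D_aux:
  assumes w: "well_order_on UNIV w" and E: "equiv A R" and E': "equiv A R'" and sub: "R \<subseteq> R'"
    and xy: "(x,y) \<in> R'" "(x,y) \<notin> R"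
    and mx: "(mx, x) \<in> R" "\<And>z. (z, x) \<in> R \<Longrightarrow> (mx, z) \<in> w"
    and my: "(my, y) \<in> R" "\<And>z. (z, y) \<in> R \<Longrightarrow> (my, z) \<in> w"
    and ne: "mx \<noteq> my" and le: "(mx, my) \<in> w"
  shows "\<exists>z. (\<exists>y. (y,z) \<in> R' \<and> (y,z) \<in> w \<and> y \<noteq> z) \<and> \<not> (\<exists>y. (y,z) \<in> R \<and> (y,z) \<in> w \<and> y \<noteq> z)"
proof (rule exI[of _ my], rule conjI)
  have sR: "sym R" and tR: "trans R" and tR': "trans R'" using E E' unfolding equiv_def by auto
  have as: "antisym w" using w
    unfolding well_order_on_def linear_order_on_def partial_order_on_def by auto
  have "(y, my) \<in> R" using my(1) sR unfolding sym_def by blast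
  then have "(y, my) \<in> R'" using sub by blast
  moreover have "(mx, x) \<in> R'" using mx(1) sub by blast
  ultimately have "(mx, my) \<in> R'" using xy(1) tR' unfolding trans_def by blast
  then show "\<exists>y. (y, my) \<in> R' \<and> (y, my) \<in> w \<and> y \<noteq> my" using le ne by blast
  show "\<not> (\<exists>y. (y, my) \<in> R \<and> (y, my) \<in> w \<and> y \<noteq> my)"
  proof
    assume "\<exists>y. (y, my) \<in> R \<and> (y, my) \<in> w \<and> y \<noteq> my"
    then obtain y' where a: "(y', my) \<in> R" "(y', my) \<in> w" "y' \<noteq> my" by blast
    have "(y', y) \<in> R" using a(1) my(1) tR unfolding trans_def by blast
    then have "(my, y') \<in> w" by (rule my(2))
    then show False using a as unfolding antisym_def by blast
  qed
qed

lemma D_strict: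
  assumes w: "well_order_on UNIV w" and E: "equiv A R" and E': "equiv A R'" and sub: "R \<subseteq> R'"
    and ne: "R \<noteq> R'"
  shows "\<exists>z. (\<exists>y. (y,z) \<in> R' \<and> (y,z) \<in> w \<and> y \<noteq> z) \<and> \<not> (\<exists>y. (y,z) \<in> R \<and> (y,z) \<in> w \<and> y \<noteq> z)"
proof -
  have "\<not> R' \<subseteq> R" using sub ne by blast
  then obtain x y where xy: "(x,y) \<in> R'" "(x,y) \<notin> R" by auto
  have A: "x \<in> A" "y \<in> A" using xy E' unfolding equiv_def by auto
  have rR: "refl_on A R" and sR: "sym R" and tR: "trans R" and sR': "sym R'"
    using E E' unfolding equiv_def by auto
  have "(x,x) \<in> R" "(y,y) \<in> R" using A rR unfolding refl_on_def by auto
  obtain mx where mx: "(mx, x) \<in> R" "\<And>z. (z, x) \<in> R \<Longrightarrow> (mx, z) \<in> w"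
    using class_min[OF w \<open>(x,x) \<in> R\<close>] by blast
  obtain my where my: "(my, y) \<in> R" "\<And>z. (z, y) \<in> R \<Longrightarrow> (my, z) \<in> w"
    using class_min[OF w \<open>(y,y) \<in> R\<close>] by blast
  have nem: "mx \<noteq> my"
  proof
    assume "mx = my"
    have "(x, mx) \<in> R" using mx(1) sR unfolding sym_def by blast
    then have "(x, y) \<in> R" using my(1) \<open>mx = my\<close> tR unfolding trans_def by blast
    then show False using xy by simp
  qed
  have tot: "total_on UNIV w" using w
    unfolding well_order_on_def linear_order_on_def by auto
  have yx: "(y,x) \<in> R'" "(y,x) \<notin> R" using xy sR sR' unfolding sym_def by blast+
  from tot nem have "(mx, my) \<in> w \<or> (my, mx) \<in> w" unfolding total_on_def by blast
  then show ?thesis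
  proof
    assume "(mx, my) \<in> w"
    then show ?thesis using D_aux[OF w E E' sub xy mx my nem] by blast
  next
    assume "(my, mx) \<in> w"
    then show ?thesis using D_aux[OF w E E' sub yx my mx nem[symmetric]] by blast
  qed
qed

lemma no_inj_pow: "\<not> inj (f :: 'b set \<Rightarrow> 'b)"
proof
  assume inj: "inj f"
  define S where "S = {x. \<exists>T. x = f T \<and> x \<notin> T}"
  have "f S \<in> S \<longleftrightarrow> f S \<notin> S"
  proof
    assume "f S \<in> S"
    then obtain T where "f S = f T" "f S \<notin> T" unfolding S_def by blast
    then show "f S \<notin> S" using inj unfolding inj_def by metis
  next
    assume "f S \<notin> S" then show "f S \<in> S" unfolding S_def by blast
  qed
  then show False by blast
qed



theorem mainTheorem13:
  fixes X :: "'a sset"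
  assumes "is_sset X"
  shows "\<exists>(r :: ((nat \<times> 'a) set \<times> (nat \<times> 'a) set) set) b.
           Well_order r \<and> b \<in> Field r \<and> nonsingular_q X (J_iter X r b)"
proof -
  note X = assms
  obtain w :: "'a rel" where w: "well_order_on UNIV w" using well_order_on by blast
  obtain r :: "((nat \<times> 'a) set \<times> (nat \<times> 'a) set) set" where r0: "well_order_on UNIV r"
    using well_order_on by blast
  have W: "Well_order r" and Fr: "Field r = UNIV" using well_order_on_Well_order[OF r0] by auto
  define D where "D R = {(n::nat, z). \<exists>y. (y,z) \<in> R n \<and> (y,z) \<in> w \<and> y \<noteq> z}"
    for R :: "nat \<Rightarrow> ('a \<times> 'a) set"
  have Dmono: "D R \<subseteq> D R'" if "\<And>n. R n \<subseteq> R' n" for R R'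
    using that unfolding D_def by blast
  have P: "is_cong X (J_iter X r b)"
    "\<And>c n. (c,b) \<in> r - Id \<Longrightarrow> J_step X (J_iter X r c) n \<subseteq> J_iter X r b n" for b
    using J_iter_props[OF X W, of b] by blast+
  have "\<exists>b. J_step X (J_iter X r b) = J_iter X r b"
  proof (rule ccontr)
    assume H: "\<not> (\<exists>b. J_step X (J_iter X r b) = J_iter X r b)"
    have strict: "\<exists>p. p \<in> D (J_step X (J_iter X r b)) \<and> p \<notin> D (J_iter X r b)" for b
    proof -
      have c: "is_cong X (J_iter X r b)" by (rule P(1))
      have c': "is_cong X (J_step X (J_iter X r b))" by (rule J_step_cong[OF X c])
      have "\<exists>n. J_step X (J_iter X r b) n \<noteq> J_iter X r b n"
      proof (rule ccontr)
        assume "\<not> (\<exists>n. J_step X (J_iter X r b) n \<noteq> J_iter X r b n)"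
        then have "J_step X (J_iter X r b) = J_iter X r b" by (simp add: fun_eq_iff)
        then show False using H by blast
      qed
      then obtain n where n: "J_step X (J_iter X r b) n \<noteq> J_iter X r b n" by blast
      obtain z where z: "\<exists>y. (y,z) \<in> J_step X (J_iter X r b) n \<and> (y,z) \<in> w \<and> y \<noteq> z"
        "\<not> (\<exists>y. (y,z) \<in> J_iter X r b n \<and> (y,z) \<in> w \<and> y \<noteq> z)"
        using D_strict[OF w cong_equiv[OF c] cong_equiv[OF c'] J_step_incr n[symmetric]] by blast
      have "(n, z) \<in> D (J_step X (J_iter X r b))" using z(1) unfolding D_def by simp
      moreover have "(n, z) \<notin> D (J_iter X r b)" using z(2) unfolding D_def by simp
      ultimately show ?thesis by blast
    qed
    then obtain \<phi> where \<phi>: "\<And>b. \<phi> b \<in> D (J_step X (J_iter X r b)) \<and> \<phi> b \<notin> D (J_iter X r b)"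
      by metis
    have lt: "\<phi> b \<noteq> \<phi> c" if bc: "(b,c) \<in> r - Id" for b c
    proof -
      have "D (J_step X (J_iter X r b)) \<subseteq> D (J_iter X r c)"
        by (rule Dmono) (rule P(2)[OF bc])
      then have "\<phi> b \<in> D (J_iter X r c)" using \<phi>[of b] by blast
      then show ?thesis using \<phi>[of c] by metis
    qed
    have "inj \<phi>"
    proof (rule injI)
      fix b c assume eq: "\<phi> b = \<phi> c"
      show "b = c"
      proof (rule ccontr)
        assume ne: "b \<noteq> c"
        have "(b,c) \<in> r - Id \<or> (c,b) \<in> r - Id" using wo_total[OF W _ _ ne] Fr by blast
        then show False using lt eq by metis
      qed
    qed
    then show False using no_inj_pow by blast
  qed
  then obtain b where b: "J_step X (J_iter X r b) = J_iter X r b" by blast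
  have "nonsingular_q X (J_iter X r b)" by (rule fix_nonsingular[OF X P(1) b])
  then show ?thesis using W Fr by blast
qed

end
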